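(* Let $A$ be a linearly ordered set and let $G$ be a passable game over $A$ that is in canonical form. Then $G$ is monotone.
   Context: Games over a poset $A$ are defined inductively: for each $a\in A$ there is an atomic game $[a]$, which has no options; and if $L$ and $R$ are non-empty sets of games, then $\{L\mid R\}$ is a composite game with left options $L$ and right options $R$. The relations $\le$ and $\lhd$ are defined by simultaneous recursion: $G\le H$ iff (1) every left option $G^L$ of $G$ satisfies $G^L\lhd H$, (2) every right option $H^R$ of $H$ satisfies $G\lhd H^R$, and (3) if $G$ or $H$ is atomic then $G\lhd H$; and $G\lhd H$ iff (1) some right option $G^R$ of $G$ satisfies $G^R\le H$, or (2) some left option $H^L$ of $H$ satisfies $G\le H^L$, or (3) $G=[a]$, $H=[b]$ are atomic and $a\le b$. $G\equiv H$ means $G\le H$ and $H\le G$. A game $G$ is passable if $G\lhd G$ and recursively all its options are passable. A left option $G^L$ is good if $G\le G^L$, a right option $G^R$ is good if $G^R\le G$; a game is monotone if all its options are good and recursively all its options are monotone. Canonical form: among distinct left options $H,K$ of $G$, $K$ is dominated if $K\le H$; among distinct right options $H,K$, $K$ is dominated if $H\le K$. A left option $H$ of $G$ is reversible if $H$ has a right option $K$ with $K\le G$; a right option $H$ of $G$ is reversible if $H$ has a left option $K$ with $G\le K$. An option $H$ of $G$ is a passing option if $H\equiv G$. $G$ is in canonical form if it has no dominated, reversible or passing options and all its options are in canonical form. *)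

theory Defs
  imports Main "HOL-Library.FSet"
begin

text \<open>Non-emptiness of the
  option sets is enforced by the predicate wf_game.\<close>

datatype 'a game = Atom 'a | Comp "'a game fset" "'a game fset"

fun leftopts :: "'a game \<Rightarrow> 'a game fset" where
  "leftopts (Atom a) = {||}"
| "leftopts (Comp L R) = L"

fun rightopts :: "'a game \<Rightarrow> 'a game fset" where
  "rightopts (Atom a) = {||}"
| "rightopts (Comp L R) = R"

fun is_atom :: "'a game \<Rightarrow> bool" where
  "is_atom (Atom a) = True"
| "is_atom (Comp L R) = False"

lemma size_fset_mem: "x |\<in>| S \<Longrightarrow> f x < size_fset f S"
proof -
  assume "x |\<in>| S"
  hence "(Suc \<circ> f) x \<le> sum (Suc \<circ> f) (fset S)"
    by (intro member_le_sum) auto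
  thus ?thesis by (simp add: size_fset.rep_eq)
qed

lemma size_leftopts[termination_simp]: "x |\<in>| leftopts G \<Longrightarrow> size x < size G"
  by (cases G) (auto dest: size_fset_mem[of _ _ size])

lemma size_rightopts[termination_simp]: "x |\<in>| rightopts G \<Longrightarrow> size x < size G"
  by (cases G) (auto dest: size_fset_mem[of _ _ size])

lemma size_Comp_L[termination_simp]: "x |\<in>| L \<Longrightarrow> size x < size (Comp L R)"
  using size_leftopts[of x "Comp L R"] by simp

lemma size_Comp_R[termination_simp]: "x |\<in>| R \<Longrightarrow> size x < size (Comp L R)"
  using size_rightopts[of x "Comp L R"] by simp

lemma size_sum_mem_L[termination_simp]:
  "x |\<in>| L \<Longrightarrow> size x < Suc ((\<Sum>x\<in>fset L. Suc (size x)) + (\<Sum>x\<in>fset R. Suc ((size::'b::size\<Rightarrow>nat) x)))"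
  using size_fset_mem[of x L size] by (simp add: size_fset.rep_eq)

lemma size_sum_mem_R[termination_simp]:
  "x |\<in>| R \<Longrightarrow> size x < Suc ((\<Sum>x\<in>fset L. Suc ((size::'b::size\<Rightarrow>nat) x)) + (\<Sum>x\<in>fset R. Suc (size x)))"
  using size_fset_mem[of x R size] by (simp add: size_fset.rep_eq)

fun wf_game :: "'a game \<Rightarrow> bool" where
  "wf_game (Atom a) = True"
| "wf_game (Comp L R) = (L \<noteq> {||} \<and> R \<noteq> {||} \<and> fBall L wf_game \<and> fBall R wf_game)"

fun atom_le :: "'a::order game \<Rightarrow> 'a game \<Rightarrow> bool" where
  "atom_le (Atom a) (Atom b) = (a \<le> b)"
| "atom_le _ _ = False"

function game_le :: "'a::order game \<Rightarrow> 'a game \<Rightarrow> bool"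
  and game_lf :: "'a::order game \<Rightarrow> 'a game \<Rightarrow> bool" where
  "game_le G H =
     ((\<forall>GL|\<in>|leftopts G. game_lf GL H) \<and>
      (\<forall>HR|\<in>|rightopts H. game_lf G HR) \<and>
      ((is_atom G \<or> is_atom H) \<longrightarrow> game_lf G H))"
| "game_lf G H =
     ((\<exists>GR|\<in>|rightopts G. game_le GR H) \<or>
      (\<exists>HL|\<in>|leftopts H. game_le G HL) \<or>
      atom_le G H)"
  by pat_completeness auto
termination
  by (relation "measures [\<lambda>x. case x of Inl (G, H) \<Rightarrow> size G + size H | Inr (G, H) \<Rightarrow> size G + size H,
                          \<lambda>x. case x of Inl _ \<Rightarrow> 1 | Inr _ \<Rightarrow> 0]")
     (simp_all, (drule size_leftopts size_rightopts, simp)+)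

declare game_le.simps[simp del] game_lf.simps[simp del]

definition game_equiv :: "'a::order game \<Rightarrow> 'a game \<Rightarrow> bool" where
  "game_equiv G H \<longleftrightarrow> game_le G H \<and> game_le H G"

fun passable :: "'a::order game \<Rightarrow> bool" where
  "passable (Atom a) = game_lf (Atom a) (Atom a)"
| "passable (Comp L R) =
     (game_lf (Comp L R) (Comp L R) \<and> fBall L passable \<and> fBall R passable)"

fun monotone_game :: "'a::order game \<Rightarrow> bool" where
  "monotone_game (Atom a) = True"
| "monotone_game (Comp L R) =
     ((\<forall>GL|\<in>|L. game_le (Comp L R) GL) \<and>
      (\<forall>GR|\<in>|R. game_le GR (Comp L R)) \<and>
      fBall L monotone_game \<and> fBall R monotone_game)"

definition has_dominated :: "'a::order game \<Rightarrow> bool" where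
  "has_dominated G \<longleftrightarrow>
     (\<exists>H K. H |\<in>| leftopts G \<and> K |\<in>| leftopts G \<and> H \<noteq> K \<and> game_le K H) \<or>
     (\<exists>H K. H |\<in>| rightopts G \<and> K |\<in>| rightopts G \<and> H \<noteq> K \<and> game_le H K)"

definition has_reversible :: "'a::order game \<Rightarrow> bool" where
  "has_reversible G \<longleftrightarrow>
     (\<exists>H. H |\<in>| leftopts G \<and> (\<exists>K|\<in>|rightopts H. game_le K G)) \<or>
     (\<exists>H. H |\<in>| rightopts G \<and> (\<exists>K|\<in>|leftopts H. game_le G K))"

definition has_passing :: "'a::order game \<Rightarrow> bool" where
  "has_passing G \<longleftrightarrow>
     (\<exists>H. (H |\<in>| leftopts G \<or> H |\<in>| rightopts G) \<and> game_equiv H G)"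

fun canonical :: "'a::order game \<Rightarrow> bool" where
  "canonical (Atom a) = True"
| "canonical (Comp L R) =
     (\<not> has_dominated (Comp L R) \<and> \<not> has_reversible (Comp L R) \<and>
      \<not> has_passing (Comp L R) \<and> fBall L canonical \<and> fBall R canonical)"

end

theory Submission
  imports Defs
begin

lemma lfI_R: "GR |\<in>| rightopts G \<Longrightarrow> game_le GR H \<Longrightarrow> game_lf G H"
  by (subst game_lf.simps) auto

lemma lfI_L: "HL |\<in>| leftopts H \<Longrightarrow> game_le G HL \<Longrightarrow> game_lf G H"
  by (subst game_lf.simps) auto

lemma lf_atoms: "game_lf (Atom a) (Atom b) \<longleftrightarrow> a \<le> b"
  by (subst game_lf.simps) auto

lemma le_atoms: "game_le (Atom a) (Atom b) \<longleftrightarrow> a \<le> b"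
  by (subst game_le.simps) (auto simp: lf_atoms)

lemma lfE:
  assumes "game_lf G H"
    and "\<And>GR. GR |\<in>| rightopts G \<Longrightarrow> game_le GR H \<Longrightarrow> P"
    and "\<And>HL. HL |\<in>| leftopts H \<Longrightarrow> game_le G HL \<Longrightarrow> P"
    and "\<And>a b. G = Atom a \<Longrightarrow> H = Atom b \<Longrightarrow> a \<le> b \<Longrightarrow> P"
  shows P
proof -
  have "(\<exists>GR|\<in>|rightopts G. game_le GR H) \<or> (\<exists>HL|\<in>|leftopts H. game_le G HL) \<or> atom_le G H"
    using assms(1) by (subst (asm) game_lf.simps)
  moreover have "atom_le G H \<Longrightarrow> \<exists>a b. G = Atom a \<and> H = Atom b \<and> a \<le> b"
    by (cases G; cases H) auto
  ultimately show P using assms(2-4) by blast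
qed

lemma leD_L: "game_le G H \<Longrightarrow> GL |\<in>| leftopts G \<Longrightarrow> game_lf GL H"
  by (subst (asm) game_le.simps) auto

lemma leD_R: "game_le G H \<Longrightarrow> HR |\<in>| rightopts H \<Longrightarrow> game_lf G HR"
  by (subst (asm) game_le.simps) auto

lemma leD_A: "game_le G H \<Longrightarrow> is_atom G \<or> is_atom H \<Longrightarrow> game_lf G H"
  by (subst (asm) game_le.simps) auto

lemma leI:
  "(\<And>GL. GL |\<in>| leftopts G \<Longrightarrow> game_lf GL H) \<Longrightarrow> (\<And>HR. HR |\<in>| rightopts H \<Longrightarrow> game_lf G HR)
   \<Longrightarrow> (is_atom G \<or> is_atom H \<Longrightarrow> game_lf G H) \<Longrightarrow> game_le G H"
  by (subst game_le.simps) auto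

lemma atom_opts: "is_atom G \<Longrightarrow> leftopts G = {||} \<and> rightopts G = {||}"
  by (cases G) auto

lemma passable_lf: "passable G \<Longrightarrow> game_lf G G"
  by (cases G) auto

lemma passable_L: "passable G \<Longrightarrow> GL |\<in>| leftopts G \<Longrightarrow> passable GL"
  by (cases G) auto

lemma passable_R: "passable G \<Longrightarrow> GR |\<in>| rightopts G \<Longrightarrow> passable GR"
  by (cases G) auto

lemma trans_aux:
  fixes G H K :: "'a::order game"
  shows "(game_le G H \<longrightarrow> game_le H K \<longrightarrow> game_le G K) \<and>
         (game_le G H \<longrightarrow> game_lf H K \<longrightarrow> game_lf G K) \<and>
         (game_lf G H \<longrightarrow> game_le H K \<longrightarrow> game_lf G K)"
proof (induction "size G + size H + size K" arbitrary: G H K rule: less_induct)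
  case less
  have ii: "game_lf G K" if gh: "game_le G H" and hk: "game_lf H K"
    using hk
  proof (rule lfE)
    fix HR assume hr: "HR |\<in>| rightopts H" and hrk: "game_le HR K"
    have "game_lf G HR" using leD_R[OF gh hr] .
    moreover have "size G + size HR + size K < size G + size H + size K"
      using size_rightopts[OF hr] by simp
    ultimately show ?thesis using less hrk by blast
  next
    fix KL assume kl: "KL |\<in>| leftopts K" and hkl: "game_le H KL"
    have "size G + size H + size KL < size G + size H + size K"
      using size_leftopts[OF kl] by simp
    then have "game_le G KL" using less gh hkl by blast
    then show ?thesis using lfI_L[OF kl] by blast
  next
    fix b c assume H: "H = Atom b" and K: "K = Atom c" and bc: "b \<le> c"
    have "game_lf G H" using leD_A[OF gh] H by simp
    then show ?thesis
    proof (rule lfE)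
      fix GR assume gr: "GR |\<in>| rightopts G" "game_le GR H"
      have hk': "game_le H K" using H K bc by (simp add: le_atoms)
      have "size GR + size H + size K < size G + size H + size K"
        using size_rightopts[OF gr(1)] by simp
      hence "game_le GR K" using less gr(2) hk' by blast
      thus ?thesis using lfI_R gr(1) by blast
    next
      fix HL assume "HL |\<in>| leftopts H" thus ?thesis using H by simp
    next
      fix a b' assume "G = Atom a" "H = Atom b'" "a \<le> b'"
      thus ?thesis using H K bc lf_atoms by (metis game.inject(1) order_trans)
    qed
  qed
  have iii: "game_lf G K" if gh: "game_lf G H" and hk: "game_le H K"
    using gh
  proof (rule lfE)
    fix GR assume gr: "GR |\<in>| rightopts G" and grh: "game_le GR H"
    have "size GR + size H + size K < size G + size H + size K"
      using size_rightopts[OF gr] by simp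
    then have "game_le GR K" using less grh hk by blast
    then show ?thesis using lfI_R[OF gr] by blast
  next
    fix HL assume hl: "HL |\<in>| leftopts H" and ghl: "game_le G HL"
    have "game_lf HL K" using leD_L[OF hk hl] .
    moreover have "size G + size HL + size K < size G + size H + size K"
      using size_leftopts[OF hl] by simp
    ultimately show ?thesis using less ghl by blast
  next
    fix a b assume G: "G = Atom a" and H: "H = Atom b" and ab: "a \<le> b"
    have "game_lf H K" using leD_A[OF hk] H by simp
    then show ?thesis
    proof (rule lfE)
      fix HR assume "HR |\<in>| rightopts H" thus ?thesis using H by simp
    next
      fix KL assume kl: "KL |\<in>| leftopts K" "game_le H KL"
      have gh': "game_le G H" using G H ab by (simp add: le_atoms)
      have "size G + size H + size KL < size G + size H + size K"
        using size_leftopts[OF kl(1)] by simp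
      hence "game_le G KL" using less kl(2) gh' by blast
      thus ?thesis using lfI_L kl(1) by blast
    next
      fix b' c assume "H = Atom b'" "K = Atom c" "b' \<le> c"
      thus ?thesis using G H ab lf_atoms by (metis game.inject(1) order_trans)
    qed
  qed
  have i: "game_le G K" if gh: "game_le G H" and hk: "game_le H K"
  proof (rule leI)
    fix GL assume gl: "GL |\<in>| leftopts G"
    have "game_lf GL H" using leD_L[OF gh gl] .
    moreover have "size GL + size H + size K < size G + size H + size K"
      using size_leftopts[OF gl] by simp
    ultimately show "game_lf GL K" using less hk by blast
  next
    fix KR assume kr: "KR |\<in>| rightopts K"
    have "game_lf H KR" using leD_R[OF hk kr] .
    moreover have "size G + size H + size KR < size G + size H + size K"
      using size_rightopts[OF kr] by simp
    ultimately show "game_lf G KR" using less gh by blast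
  next
    assume "is_atom G \<or> is_atom K"
    then show "game_lf G K"
    proof
      assume "is_atom G"
      then have "game_lf G H" using leD_A[OF gh] by simp
      then show ?thesis using iii hk by blast
    next
      assume "is_atom K"
      then have "game_lf H K" using leD_A[OF hk] by simp
      then show ?thesis using ii gh by blast
    qed
  qed
  show ?case using i ii iii by blast
qed

lemma le_trans': "game_le G H \<Longrightarrow> game_le H K \<Longrightarrow> game_le G K"
  using trans_aux by blast
lemma le_lf_trans: "game_le G H \<Longrightarrow> game_lf H K \<Longrightarrow> game_lf G K"
  using trans_aux by blast
lemma lf_le_trans: "game_lf G H \<Longrightarrow> game_le H K \<Longrightarrow> game_lf G K"
  using trans_aux by blast


lemma le_refl': "game_le G G"
proof (induction "size G" arbitrary: G rule: less_induct)
  case less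
  show ?case
  proof (rule leI)
    fix GL assume gl: "GL |\<in>| leftopts G"
    have "game_le GL GL" using less size_leftopts[OF gl] by blast
    then show "game_lf GL G" using lfI_L[OF gl] by blast
  next
    fix GR assume gr: "GR |\<in>| rightopts G"
    have "game_le GR GR" using less size_rightopts[OF gr] by blast
    then show "game_lf G GR" using lfI_R[OF gr] by blast
  next
    assume "is_atom G \<or> is_atom G"
    then obtain a where "G = Atom a" by (cases G) auto
    then show "game_lf G G" by (simp add: lf_atoms)
  qed
qed

lemma PQ:
  fixes G H :: "'a::linorder game"
  shows "passable G \<Longrightarrow> passable H \<Longrightarrow>
    (\<not> game_le G H \<longrightarrow> game_lf H G) \<and> (\<not> game_lf G H \<longrightarrow> game_le H G)"
proof (induction "size G + size H" arbitrary: G H rule: less_induct)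
  case less
  note pG = less.prems(1) and pH = less.prems(2)
  have IH: "\<And>G' H' :: 'a game. size G' + size H' < size G + size H \<Longrightarrow> passable G' \<Longrightarrow> passable H' \<Longrightarrow>
    (\<not> game_le G' H' \<longrightarrow> game_lf H' G') \<and> (\<not> game_lf G' H' \<longrightarrow> game_le H' G')"
    by (rule less.hyps)
  have Rl: "game_lf H G" if at: "is_atom G \<or> is_atom H" and nlf: "\<not> game_lf G H"
  proof -
    consider (AA) a b where "G = Atom a" "H = Atom b" | (AC) "is_atom G" "\<not> is_atom H"
      | (CA) "\<not> is_atom G" "is_atom H"
      using at by (cases G; cases H) auto
    then show ?thesis
    proof cases
      case AA
      then show ?thesis using nlf by (auto simp: lf_atoms)
    next
      case AC
      from passable_lf[OF pH] show ?thesis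
      proof (rule lfE)
        fix HR assume hr: "HR |\<in>| rightopts H" "game_le HR H"
        have "\<not> game_lf G HR" using lf_le_trans hr(2) nlf by blast
        moreover have "size G + size HR < size G + size H" using size_rightopts[OF hr(1)] by simp
        ultimately have "game_le HR G" using IH passable_R[OF pH hr(1)] pG by blast
        then show ?thesis using lfI_R[OF hr(1)] by blast
      next
        fix HL assume hl: "HL |\<in>| leftopts H" "game_le H HL"
        have "\<not> game_le G HL" using lfI_L[OF hl(1)] nlf by blast
        moreover have "size G + size HL < size G + size H" using size_leftopts[OF hl(1)] by simp
        ultimately have "game_lf HL G" using IH passable_L[OF pH hl(1)] pG by blast
        then show ?thesis using le_lf_trans hl(2) by blast
      next
        fix a b assume "H = Atom a" "H = Atom b" then show ?thesis using AC by simp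
      qed
    next
      case CA
      from passable_lf[OF pG] show ?thesis
      proof (rule lfE)
        fix GR assume gr: "GR |\<in>| rightopts G" "game_le GR G"
        have "\<not> game_le GR H" using lfI_R[OF gr(1)] nlf by blast
        moreover have "size GR + size H < size G + size H" using size_rightopts[OF gr(1)] by simp
        ultimately have "game_lf H GR" using IH passable_R[OF pG gr(1)] pH by blast
        then show ?thesis using lf_le_trans gr(2) by blast
      next
        fix GL assume gl: "GL |\<in>| leftopts G" "game_le G GL"
        have "\<not> game_lf GL H" using le_lf_trans gl(2) nlf by blast
        moreover have "size GL + size H < size G + size H" using size_leftopts[OF gl(1)] by simp
        ultimately have "game_le H GL" using IH passable_L[OF pG gl(1)] pH by blast
        then show ?thesis using lfI_L[OF gl(1)] by blast
      next
        fix a b assume "G = Atom a" "G = Atom b" then show ?thesis using CA by simp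
      qed
    qed
  qed
  have P: "game_lf H G" if nle: "\<not> game_le G H"
  proof -
    have "(\<exists>GL. GL |\<in>| leftopts G \<and> \<not> game_lf GL H) \<or> (\<exists>HR. HR |\<in>| rightopts H \<and> \<not> game_lf G HR)
      \<or> ((is_atom G \<or> is_atom H) \<and> \<not> game_lf G H)"
      using nle leI by blast
    then show ?thesis
    proof (elim disjE)
      assume "\<exists>GL. GL |\<in>| leftopts G \<and> \<not> game_lf GL H"
      then obtain GL where gl: "GL |\<in>| leftopts G" "\<not> game_lf GL H" by blast
      have "size GL + size H < size G + size H" using size_leftopts[OF gl(1)] by simp
      then have "game_le H GL" using IH passable_L[OF pG gl(1)] pH gl(2) by blast
      then show ?thesis using lfI_L[OF gl(1)] by blast
    next
      assume "\<exists>HR. HR |\<in>| rightopts H \<and> \<not> game_lf G HR"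
      then obtain HR where hr: "HR |\<in>| rightopts H" "\<not> game_lf G HR" by blast
      have "size G + size HR < size G + size H" using size_rightopts[OF hr(1)] by simp
      then have "game_le HR G" using IH passable_R[OF pH hr(1)] pG hr(2) by blast
      then show ?thesis using lfI_R[OF hr(1)] by blast
    next
      assume "(is_atom G \<or> is_atom H) \<and> \<not> game_lf G H"
      then show ?thesis using Rl by blast
    qed
  qed
  have Q: "game_le H G" if nlf: "\<not> game_lf G H"
  proof (rule leI)
    fix HL assume hl: "HL |\<in>| leftopts H"
    have "\<not> game_le G HL" using lfI_L[OF hl] nlf by blast
    moreover have "size G + size HL < size G + size H" using size_leftopts[OF hl] by simp
    ultimately show "game_lf HL G" using IH passable_L[OF pH hl] pG by blast
  next
    fix GR assume gr: "GR |\<in>| rightopts G"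
    have "\<not> game_le GR H" using lfI_R[OF gr] nlf by blast
    moreover have "size GR + size H < size G + size H" using size_rightopts[OF gr] by simp
    ultimately show "game_lf H GR" using IH passable_R[OF pG gr] pH by blast
  next
    assume "is_atom H \<or> is_atom G"
    then show "game_lf H G" using Rl nlf by blast
  qed
  show ?case using P Q by blast
qed

lemma T_left:
  fixes X Z :: "'a::order game"
  assumes X: "\<not> is_atom X" and XL: "\<And>XL. XL |\<in>| leftopts X \<Longrightarrow> game_lf XL (Atom a)"
  shows "passable Z \<Longrightarrow> game_le Z X \<Longrightarrow> game_le Z (Atom a)"
proof (induction "size Z" arbitrary: Z rule: less_induct)
  case less
  have 1: "game_lf ZL (Atom a)" if zl: "ZL |\<in>| leftopts Z" for ZL
  proof -
    have "game_lf ZL X" using leD_L[OF less.prems(2) zl] .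
    then show ?thesis
    proof (rule lfE)
      fix ZLR assume r: "ZLR |\<in>| rightopts ZL" "game_le ZLR X"
      have "passable ZLR" using passable_R[OF passable_L[OF less.prems(1) zl] r(1)] .
      moreover have "size ZLR < size Z" using size_rightopts[OF r(1)] size_leftopts[OF zl] by simp
      ultimately have "game_le ZLR (Atom a)" using less.hyps r(2) by blast
      then show ?thesis using lfI_R[OF r(1)] by blast
    next
      fix XL' assume "XL' |\<in>| leftopts X" "game_le ZL XL'"
      then show ?thesis using XL le_lf_trans by blast
    next
      fix b c assume "ZL = Atom b" "X = Atom c" then show ?thesis using X by simp
    qed
  qed
  show ?case
  proof (rule leI)
    fix ZL assume "ZL |\<in>| leftopts Z" then show "game_lf ZL (Atom a)" using 1 by blast
  next
    fix HR assume "HR |\<in>| rightopts (Atom a)" then show "game_lf Z HR" by simp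
  next
    from passable_lf[OF less.prems(1)] show "game_lf Z (Atom a)"
    proof (rule lfE)
      fix ZR assume zr: "ZR |\<in>| rightopts Z" "game_le ZR Z"
      have "game_le ZR X" using le_trans' zr(2) less.prems(2) by blast
      moreover have "size ZR < size Z" using size_rightopts[OF zr(1)] by simp
      ultimately have "game_le ZR (Atom a)" using less.hyps passable_R[OF less.prems(1) zr(1)] by blast
      then show ?thesis using lfI_R[OF zr(1)] by blast
    next
      fix ZL assume "ZL |\<in>| leftopts Z" "game_le Z ZL"
      then show ?thesis using 1 le_lf_trans by blast
    next
      fix b c assume Z: "Z = Atom b"
      have "game_lf Z X" using leD_A[OF less.prems(2)] Z by simp
      then show ?thesis
      proof (rule lfE)
        fix ZR assume "ZR |\<in>| rightopts Z" then show ?thesis using Z by simp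
      next
        fix XL' assume "XL' |\<in>| leftopts X" "game_le Z XL'"
        then show ?thesis using XL le_lf_trans by blast
      next
        fix b c assume "Z = Atom b" "X = Atom c" then show ?thesis using X by simp
      qed
    qed
  qed
qed

lemma T_right:
  fixes X Z :: "'a::order game"
  assumes X: "\<not> is_atom X" and XR: "\<And>XR. XR |\<in>| rightopts X \<Longrightarrow> game_lf (Atom a) XR"
  shows "passable Z \<Longrightarrow> game_le X Z \<Longrightarrow> game_le (Atom a) Z"
proof (induction "size Z" arbitrary: Z rule: less_induct)
  case less
  have 1: "game_lf (Atom a) ZR" if zr: "ZR |\<in>| rightopts Z" for ZR
  proof -
    have "game_lf X ZR" using leD_R[OF less.prems(2) zr] .
    then show ?thesis
    proof (rule lfE)
      fix XR' assume "XR' |\<in>| rightopts X" "game_le XR' ZR"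
      then show ?thesis using XR lf_le_trans by blast
    next
      fix ZRL assume l: "ZRL |\<in>| leftopts ZR" "game_le X ZRL"
      have "passable ZRL" using passable_L[OF passable_R[OF less.prems(1) zr] l(1)] .
      moreover have "size ZRL < size Z" using size_leftopts[OF l(1)] size_rightopts[OF zr] by simp
      ultimately have "game_le (Atom a) ZRL" using less.hyps l(2) by blast
      then show ?thesis using lfI_L[OF l(1)] by blast
    next
      fix b c assume "X = Atom b" then show ?thesis using X by simp
    qed
  qed
  show ?case
  proof (rule leI)
    fix ZR assume "ZR |\<in>| rightopts Z" then show "game_lf (Atom a) ZR" using 1 by blast
  next
    fix GL assume "GL |\<in>| leftopts (Atom a)" then show "game_lf GL Z" by simp
  next
    from passable_lf[OF less.prems(1)] show "game_lf (Atom a) Z"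
    proof (rule lfE)
      fix ZR assume "ZR |\<in>| rightopts Z" "game_le ZR Z"
      then show ?thesis using 1 lf_le_trans by blast
    next
      fix ZL assume zl: "ZL |\<in>| leftopts Z" "game_le Z ZL"
      have "game_le X ZL" using le_trans' zl(2) less.prems(2) by blast
      moreover have "size ZL < size Z" using size_leftopts[OF zl(1)] by simp
      ultimately have "game_le (Atom a) ZL" using less.hyps passable_L[OF less.prems(1) zl(1)] by blast
      then show ?thesis using lfI_L[OF zl(1)] by blast
    next
      fix b c assume Z: "Z = Atom b"
      have "game_lf X Z" using leD_A[OF less.prems(2)] Z by simp
      then show ?thesis
      proof (rule lfE)
        fix XR' assume "XR' |\<in>| rightopts X" "game_le XR' Z"
        then show ?thesis using XR lf_le_trans by blast
      next
        fix ZL assume "ZL |\<in>| leftopts Z" then show ?thesis using Z by simp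
      next
        fix b c assume "X = Atom b" then show ?thesis using X by simp
      qed
    qed
  qed
qed

lemma main:
  fixes G :: "'a::linorder game"
  shows "passable G \<Longrightarrow> canonical G \<Longrightarrow> monotone_game G"
proof (induction "size G" arbitrary: G rule: less_induct)
  case less
  show ?case
  proof (cases G)
    case (Atom a) then show ?thesis by simp
  next
    case (Comp L R)
    note pG = less.prems(1) and cG = less.prems(2)
    have ndom: "\<not> has_dominated G" and nrev: "\<not> has_reversible G"
      using cG Comp by simp_all
    have nat: "\<not> is_atom G" using Comp by simp
    have pL: "passable H" "canonical H" if "H |\<in>| L" for H
      using pG cG Comp that by auto
    have pR: "passable H" "canonical H" if "H |\<in>| R" for H
      using pG cG Comp that by auto
    have mL: "monotone_game H" if h: "H |\<in>| L" for H
      using less.hyps[of H] pL[OF h] size_Comp_L[OF h, of R] Comp by blast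
    have mR: "monotone_game H" if h: "H |\<in>| R" for H
      using less.hyps[of H] pR[OF h] size_Comp_R[OF h, of L] Comp by blast
    have left: "game_le G H" if h: "H |\<in>| L" for H
    proof -
      have pH: "passable H" using pL[OF h] by blast
      have a: "game_lf L' H" if l': "L' |\<in>| L" for L'
      proof (rule ccontr)
        assume "\<not> game_lf L' H"
        then have le: "game_le H L'" using PQ[of L' H] pL[OF l'] pH by blast
        show False
        proof (cases "L' = H")
          case True then show False using passable_lf[OF pH] \<open>\<not> game_lf L' H\<close> by simp
        next
          case False
          then have "has_dominated G" unfolding has_dominated_def using Comp l' h le by auto
          then show False using ndom by blast
        qed
      qed
      have b: "game_lf G HR" if hr: "HR |\<in>| rightopts H" for HR
      proof (rule ccontr)
        assume "\<not> game_lf G HR"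
        then have "game_le HR G" using PQ[of G HR] pG passable_R[OF pH hr] by blast
        then have "has_reversible G" unfolding has_reversible_def using Comp h hr by auto
        then show False using nrev by blast
      qed
      show ?thesis
      proof (rule leI)
        fix GL assume "GL |\<in>| leftopts G" then show "game_lf GL H" using a Comp by simp
      next
        fix HR assume "HR |\<in>| rightopts H" then show "game_lf G HR" using b by blast
      next
        assume "is_atom G \<or> is_atom H"
        then obtain c where H: "H = Atom c" using nat by (cases H) auto
        have "game_le G (Atom c)"
          using T_left[of G c G] nat a Comp H pG le_refl' by auto
        then show "game_lf G H" using leD_A[of G "Atom c"] H by simp
      qed
    qed
    have right: "game_le H G" if h: "H |\<in>| R" for H
    proof -
      have pH: "passable H" using pR[OF h] by blast
      have a: "game_lf H R'" if r': "R' |\<in>| R" for R'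
      proof (rule ccontr)
        assume "\<not> game_lf H R'"
        then have le: "game_le R' H" using PQ[of H R'] pR[OF r'] pH by blast
        show False
        proof (cases "R' = H")
          case True then show False using passable_lf[OF pH] \<open>\<not> game_lf H R'\<close> by simp
        next
          case False
          then have "has_dominated G" unfolding has_dominated_def using Comp r' h le by auto
          then show False using ndom by blast
        qed
      qed
      have b: "game_lf HL G" if hl: "HL |\<in>| leftopts H" for HL
      proof (rule ccontr)
        assume "\<not> game_lf HL G"
        then have "game_le G HL" using PQ[of HL G] pG passable_L[OF pH hl] by blast
        then have "has_reversible G" unfolding has_reversible_def using Comp h hl by auto
        then show False using nrev by blast
      qed
      show ?thesis
      proof (rule leI)
        fix HL assume "HL |\<in>| leftopts H" then show "game_lf HL G" using b by blast
      next
        fix GR assume "GR |\<in>| rightopts G" then show "game_lf H GR" using a Comp by simp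
      next
        assume "is_atom H \<or> is_atom G"
        then obtain c where H: "H = Atom c" using nat by (cases H) auto
        have "game_le (Atom c) G"
          using T_right[of G c G] nat a Comp H pG le_refl' by auto
        then show "game_lf H G" using leD_A[of "Atom c" G] H by simp
      qed
    qed
    show ?thesis using Comp left right mL mR by auto
  qed
qed

theorem theorem7p4:
  fixes G :: "'a::linorder game"
  assumes "wf_game G" and "passable G" and "canonical G"
  shows "monotone_game G"
  using main assms(2,3) by blast

end
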